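(* Let $(\omega_a)_{a\in\mathbb{Z}^d}$ be real frequencies satisfying the following non-resonance condition: there exist $\gamma>0$, $\nu>0$, $c_0>0$ such that for all $r\ge3$ and all non-resonant ${\boldsymbol j}\in\mathcal{Z}^r$, $$|\Omega({\boldsymbol j})|\ge\frac{\gamma c_0^r}{\mu({\boldsymbol j})^{\nu r}}.$$ Let $N$ be fixed and let $Q\in\mathcal{P}_k$ be a homogeneous polynomial of degree $k$. Then the homological equation $\{\chi,H_0\}-Z=Q$ admits a solution $(\chi,Z)$ of homogeneous polynomials of degree $k$ such that $Z$ is in $N$-normal form and $$\|Z\|\le\|Q\|,\qquad \|\chi\|\le\frac{N^{\nu k}}{\gamma c_0^k}\|Q\|.$$
   Context: $\mathcal{Z}=\mathbb{Z}^d\times\{\pm1\}$; for $j=(a,\delta)$, $|j|=|a|$ and $\bar j=(a,-\delta)$; $z\in\mathbb{C}^{\mathcal{Z}}$ identified with $(\xi,\eta)$ via $z_{(a,1)}=\xi_a$, $z_{(a,-1)}=\eta_a$. $H_0=\sum_a\omega_a\xi_a\eta_a$. Poisson bracket: $\{F,G\}=i\sum_a\big(\frac{\partial F}{\partial\eta_a}\frac{\partial G}{\partial\xi_a}-\frac{\partial F}{\partial\xi_a}\frac{\partial G}{\partial\eta_a}\big)$. For ${\boldsymbol j}=(j_1,\dots,j_\ell)$, $j_i=(a_i,\delta_i)$: $z_{\boldsymbol j}=z_{j_1}\cdots z_{j_\ell}$, momentum $\mathcal{M}({\boldsymbol j})=\sum\delta_ia_i$, divisor $\Omega({\boldsymbol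 j})=\sum_i\delta_i\omega_{a_i}$, $\mathcal{I}_\ell=\{{\boldsymbol j}:\mathcal{M}({\boldsymbol j})=0\}$, and for $\ell\ge3$, $\mu({\boldsymbol j})$ is the third largest of $|j_1|,\dots,|j_\ell|$. ${\boldsymbol j}$ is resonant (${\boldsymbol j}\in\mathcal{N}_\ell$) if $\ell$ is even and ${\boldsymbol j}$ is, up to order, $(i_1,\dots,i_{\ell/2},\bar i_1,\dots,\bar i_{\ell/2})$; otherwise non-resonant. $\mathcal{P}_k$: real polynomials $P=\sum_{\ell=2}^k\sum_{{\boldsymbol j}\in\mathcal{I}_\ell}a_{\boldsymbol j}z_{\boldsymbol j}$ with $a_{\bar{\boldsymbol j}}=\overline{a_{\boldsymbol j}}$ and bounded coefficients, with norm $\|P\|=\sum_\ell\sup_{{\boldsymbol j}\in\mathcal{I}_\ell}|a_{\boldsymbol j}|$. $\mathcal{J}_\ell(N)=\{{\boldsymbol j}\in\mathcal{I}_\ell:\mu({\boldsymbol j})>N\}$; $Z\in\mathcal{P}_k$ is in $N$-normal form if $Z=\sum_{\ell=3}^k\sum_{{\boldsymbol j}\in\mathcal{N}_\ell\cup\mathcal{J}_\ell(N)}a_{\boldsymbol j}z_{\boldsymbol j}$. *)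

theory Defs
  imports "HOL-Analysis.Analysis"
begin

text \<open>Indices j = (a, delta) in Z^d x {+1,-1}; the sign is encoded as a boolean:
  True means delta = +1 (variable xi_a), False means delta = -1 (variable eta_a).\<close>

type_synonym 'd idx = "(int ^ 'd::finite) \<times> bool"

definition sgnv :: "bool \<Rightarrow> int" where
  "sgnv b = (if b then 1 else -1)"

definition inorm :: "int ^ ('d::finite) \<Rightarrow> real" where
  "inorm a = max 1 (norm (\<chi> i. real_of_int (a $ i)))"

definition ibar :: "('d::finite) idx \<Rightarrow> 'd idx" where
  "ibar j = (fst j, \<not> snd j)"

definition momentum :: "('d::finite) idx list \<Rightarrow> int ^ 'd" where
  "momentum js = (\<chi> i. sum_list (map (\<lambda>(a, b). sgnv b * a $ i) js))"

definition Omega :: "(int ^ ('d::finite) \<Rightarrow> real) \<Rightarrow> 'd idx list \<Rightarrow> real" where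
  "Omega \<omega> js = sum_list (map (\<lambda>(a, b). real_of_int (sgnv b) * \<omega> a) js)"

text \<open>mu(j): third largest of |j_1|, ..., |j_l| (for l >= 3)\<close>
definition mu :: "('d::finite) idx list \<Rightarrow> real" where
  "mu js = rev (sort (map (\<lambda>j. inorm (fst j)) js)) ! 2"

definition resonant :: "('d::finite) idx list \<Rightarrow> bool" where
  "resonant js \<longleftrightarrow> even (length js) \<and>
     (\<exists>is. length is = length js div 2 \<and> mset js = mset (is @ map ibar is))"

text \<open>Polynomials are represented by their coefficient families
  P = sum_l sum_{j in I_l} a_j z_j, as functions from index tuples to coefficients.\<close>

text \<open>Element of P_k: real, bounded coefficients supported on I_l, 2 <= l <= k.\<close>
definition in_Pk :: "nat \<Rightarrow> (('d::finite) idx list \<Rightarrow> complex) \<Rightarrow> bool" where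
  "in_Pk k P \<longleftrightarrow>
     (\<forall>js. P js \<noteq> 0 \<longrightarrow> 2 \<le> length js \<and> length js \<le> k \<and> momentum js = 0) \<and>
     (\<forall>js. P (map ibar js) = cnj (P js)) \<and>
     (\<exists>B. \<forall>js. cmod (P js) \<le> B)"

definition hom_poly :: "nat \<Rightarrow> (('d::finite) idx list \<Rightarrow> complex) \<Rightarrow> bool" where
  "hom_poly k P \<longleftrightarrow> in_Pk k P \<and> (\<forall>js. P js \<noteq> 0 \<longrightarrow> length js = k)"

definition pnorm :: "nat \<Rightarrow> (('d::finite) idx list \<Rightarrow> complex) \<Rightarrow> real" where
  "pnorm k P = (\<Sum>l = 2..k. Sup {cmod (P js) | js. length js = l \<and> momentum js = 0})"

definition normal_form :: "nat \<Rightarrow> nat \<Rightarrow> (('d::finite) idx list \<Rightarrow> complex) \<Rightarrow> bool" where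
  "normal_form N k Z \<longleftrightarrow> in_Pk k Z \<and>
     (\<forall>js. Z js \<noteq> 0 \<longrightarrow> 3 \<le> length js \<and> (resonant js \<or> mu js > real N))"

text \<open>Poisson bracket {chi, H_0} with H_0 = sum_a omega_a xi_a eta_a, on coefficient families.
  For a monomial: {z_j, H_0} = i sum_a omega_a (d z_j/d eta_a * eta_a - d z_j/d xi_a * xi_a)
  = i (sum over eta-factors of omega - sum over xi-factors of omega) z_j = -i Omega(j) z_j.\<close>
definition pb_H0 :: "(int ^ ('d::finite) \<Rightarrow> real) \<Rightarrow> ('d idx list \<Rightarrow> complex) \<Rightarrow> ('d idx list \<Rightarrow> complex)" where
  "pb_H0 \<omega> ch = (\<lambda>js. \<i> * complex_of_real
      (sum_list (map (\<lambda>(a, b). if b then - \<omega> a else \<omega> a) js)) * ch js)"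

end

theory Submission
  imports Defs
begin

lemma W_eq: "sum_list (map (\<lambda>(a, b). if b then - \<omega> a else \<omega> a) js) = - Omega \<omega> js"
  by (induction js) (auto simp: Omega_def sgnv_def)

lemma Omega_ibar: "Omega \<omega> (map ibar js) = - Omega \<omega> js"
  by (induction js) (auto simp: Omega_def ibar_def sgnv_def)

lemma mu_ibar: "mu (map ibar js) = mu js"
  by (simp add: mu_def ibar_def comp_def case_prod_beta)

lemma ibar_ibar[simp]: "ibar (ibar j) = j" by (simp add: ibar_def)

lemma map_ibar_ibar[simp]: "map ibar (map ibar js) = js" by (induct js) simp_all

lemma res_ibar1: "resonant js \<Longrightarrow> resonant (map ibar js)"
proof -
  assume "resonant js"
  then obtain ys where h: "even (length js)" "length ys = length js div 2"
    "mset js = mset (ys @ map ibar ys)" unfolding resonant_def by blast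
  have "mset (map ibar js) = image_mset ibar (mset js)" by simp
  also have "\<dots> = mset (map ibar ys @ map ibar (map ibar ys))"
    using h(3) by (simp add: ac_simps image_mset.compositionality comp_def)
  finally show ?thesis unfolding resonant_def using h
    by (intro conjI exI[of _ "map ibar ys"]) auto
qed

lemma res_ibar: "resonant (map ibar js) = resonant js"
  by (metis map_ibar_ibar res_ibar1)

lemma mu_ge1: "length js \<ge> 3 \<Longrightarrow> mu js \<ge> 1"
proof -
  assume "length js \<ge> 3"
  define xs where "xs = rev (sort (map (\<lambda>j. inorm (fst j)) js))"
  have "length xs = length js" by (simp add: xs_def)
  hence "xs ! 2 \<in> set xs" using \<open>length js \<ge> 3\<close> by (intro nth_mem) auto
  hence "xs ! 2 \<in> (\<lambda>j. inorm (fst j)) ` set js" by (simp add: xs_def)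
  hence "1 \<le> xs ! 2" by (auto simp: inorm_def)
  then show ?thesis by (simp add: mu_def xs_def)
qed

lemma mom_rep: "momentum (replicate l ((0::int^'d::finite), True)) = 0"
  by (simp add: momentum_def vec_eq_iff sgnv_def sum_list_replicate)

lemma pnorm_le:
  fixes A B :: "('d::finite) idx list \<Rightarrow> complex"
  assumes "\<And>js. cmod (A js) \<le> c * cmod (B js)" "c \<ge> 0" "\<And>js. cmod (B js) \<le> Bd"
  shows "pnorm k A \<le> c * pnorm k B"
  unfolding pnorm_def sum_distrib_left
proof (rule sum_mono)
  fix l
  have ne: "{cmod (A js) |js. length js = l \<and> momentum js = 0} \<noteq> {}"
    using mom_rep[where 'd='d, of l] by (auto intro!: exI[of _ "replicate l (0, True)"])
  have bdd: "bdd_above {cmod (B js) |js. length js = l \<and> momentum js = 0}"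
    using assms(3) by (auto simp: bdd_above_def)
  show "Sup {cmod (A js) |js. length js = l \<and> momentum js = 0}
        \<le> c * Sup {cmod (B js) |js. length js = l \<and> momentum js = 0}"
  proof (rule cSup_least[OF ne])
    fix x assume "x \<in> {cmod (A js) |js. length js = l \<and> momentum js = 0}"
    then obtain js where js: "x = cmod (A js)" "length js = l" "momentum js = 0" by blast
    have "cmod (B js) \<le> Sup {cmod (B js) |js. length js = l \<and> momentum js = 0}"
      by (rule cSup_upper[OF _ bdd]) (use js in blast)
    then show "x \<le> c * Sup {cmod (B js) |js. length js = l \<and> momentum js = 0}"
      using js assms(1)[of js] assms(2) by (meson mult_left_mono order_trans)
  qed
qed

theorem proposition2p4:
  fixes \<omega> :: "int ^ 'd \<Rightarrow> real" and \<gamma> \<nu> c0 :: real and N k :: nat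
    and Q :: "'d idx list \<Rightarrow> complex"
  assumes "\<gamma> > 0" and "\<nu> > 0" and "c0 > 0"
    and "\<forall>r\<ge>3. \<forall>js :: 'd idx list. length js = r \<and> \<not> resonant js \<longrightarrow>
           \<bar>Omega \<omega> js\<bar> \<ge> \<gamma> * c0 ^ r / (mu js powr (\<nu> * real r))"
    and "k \<ge> 3"
    and "hom_poly k Q"
  shows "\<exists>ch Z. hom_poly k ch \<and> hom_poly k Z \<and> normal_form N k Z \<and>
           (\<forall>js. pb_H0 \<omega> ch js - Z js = Q js) \<and>
           pnorm k Z \<le> pnorm k Q \<and>
           pnorm k ch \<le> real N powr (\<nu> * real k) / (\<gamma> * c0 ^ k) * pnorm k Q"
proof -
  note Qh = assms(6)[unfolded hom_poly_def in_Pk_def]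
  obtain Bd where Bd: "\<And>js. cmod (Q js) \<le> Bd" using Qh by blast
  define S where "S js \<longleftrightarrow> resonant js \<or> mu js > real N" for js :: "'d idx list"
  define C where "C = real N powr (\<nu> * real k) / (\<gamma> * c0 ^ k)"
  have C0: "C \<ge> 0" unfolding C_def using assms(1,3) by simp
  define ch where "ch js = (if Q js = 0 \<or> S js then 0 else \<i> * Q js / Omega \<omega> js)" for js
  define Z where "Z js = (if S js then - Q js else 0)" for js
  have S_ibar: "S (map ibar js) = S js" for js by (simp add: S_def res_ibar mu_ibar)
  have Qsupp: "Q js \<noteq> 0 \<Longrightarrow> length js = k \<and> momentum js = 0" for js using Qh by auto
  have Qcnj: "Q (map ibar js) = cnj (Q js)" for js using Qh by auto
  have key: "Omega \<omega> js \<noteq> 0 \<and> 1 / \<bar>Omega \<omega> js\<bar> \<le> C"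
    if "Q js \<noteq> 0" "\<not> S js" for js
  proof -
    have len: "length js = k" using Qsupp that by blast
    have nr: "\<not> resonant js" and muN: "mu js \<le> real N" using that(2) by (auto simp: S_def)
    have m1: "mu js \<ge> 1" using mu_ge1 len assms(5) by auto
    have lb: "\<bar>Omega \<omega> js\<bar> \<ge> \<gamma> * c0 ^ k / (mu js powr (\<nu> * real k))"
      using assms(4) len nr assms(5) by auto
    have pp: "mu js powr (\<nu> * real k) > 0" using m1 by simp
    have gp: "\<gamma> * c0 ^ k > 0" using assms(1,3) by simp
    have pos: "\<gamma> * c0 ^ k / (mu js powr (\<nu> * real k)) > 0" using pp gp by simp
    have Opos: "\<bar>Omega \<omega> js\<bar> > 0" using lb pos by linarith
    have "1 / \<bar>Omega \<omega> js\<bar> \<le> 1 / (\<gamma> * c0 ^ k / (mu js powr (\<nu> * real k)))"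
      by (rule divide_left_mono[OF lb _ mult_pos_pos[OF Opos pos]]) simp
    also have "\<dots> = mu js powr (\<nu> * real k) / (\<gamma> * c0 ^ k)" by simp
    also have "\<dots> \<le> C" unfolding C_def
      using muN m1 assms(2) gp by (intro divide_right_mono powr_mono2) auto
    finally have "1 / \<bar>Omega \<omega> js\<bar> \<le> C" .
    moreover have "\<bar>Omega \<omega> js\<bar> > 0" using lb pos by linarith
    ultimately show ?thesis by auto
  qed
  have chb: "cmod (ch js) \<le> C * cmod (Q js)" for js
  proof (cases "Q js = 0 \<or> S js")
    case True then show ?thesis using C0 by (simp add: ch_def)
  next
    case False
    with key[of js] have k1: "Omega \<omega> js \<noteq> 0" "1 / \<bar>Omega \<omega> js\<bar> \<le> C" by auto
    have "cmod (ch js) = cmod (Q js) * (1 / \<bar>Omega \<omega> js\<bar>)"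
      using False by (simp add: ch_def norm_divide norm_mult)
    also have "\<dots> \<le> cmod (Q js) * C" using k1 by (intro mult_left_mono) auto
    finally show ?thesis by (simp add: mult.commute)
  qed
  have Zb: "cmod (Z js) \<le> 1 * cmod (Q js)" for js by (simp add: Z_def)
  have hch: "hom_poly k ch"
    unfolding hom_poly_def in_Pk_def
  proof (intro conjI allI impI)
    fix js assume "ch js \<noteq> 0"
    hence "Q js \<noteq> 0" by (auto simp: ch_def)
    thus "2 \<le> length js" "length js \<le> k" "momentum js = 0" "length js = k"
      using Qsupp assms(5) by auto
  next
    fix js
    show "ch (map ibar js) = cnj (ch js)"
      by (simp add: ch_def S_ibar Qcnj Omega_ibar)
  next
    show "\<exists>B. \<forall>js. cmod (ch js) \<le> B"
      using chb Bd C0 by (meson mult_left_mono order_trans)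
  qed
  have hZ: "hom_poly k Z"
    unfolding hom_poly_def in_Pk_def
  proof (intro conjI allI impI)
    fix js assume "Z js \<noteq> 0"
    hence "Q js \<noteq> 0" by (auto simp: Z_def split: if_splits)
    thus "2 \<le> length js" "length js \<le> k" "momentum js = 0" "length js = k"
      using Qsupp assms(5) by auto
  next
    fix js
    show "Z (map ibar js) = cnj (Z js)"
      by (simp add: Z_def S_ibar Qcnj)
  next
    show "\<exists>B. \<forall>js. cmod (Z js) \<le> B"
      using Zb Bd by (metis mult_1 order_trans)
  qed
  have nf: "normal_form N k Z"
    unfolding normal_form_def
  proof (intro conjI allI impI)
    show "in_Pk k Z" using hZ by (simp add: hom_poly_def)
  next
    fix js assume "Z js \<noteq> 0"
    hence "Q js \<noteq> 0" "S js" by (auto simp: Z_def split: if_splits)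
    thus "3 \<le> length js" "resonant js \<or> real N < mu js"
      using Qsupp assms(5) by (auto simp: S_def)
  qed
  have eq: "pb_H0 \<omega> ch js - Z js = Q js" for js
  proof (cases "Q js = 0 \<or> S js")
    case True then show ?thesis by (auto simp: pb_H0_def ch_def Z_def)
  next
    case False
    with key[of js] have k1: "Omega \<omega> js \<noteq> 0" by auto
    have "pb_H0 \<omega> ch js = \<i> * complex_of_real (- Omega \<omega> js) * (\<i> * Q js / Omega \<omega> js)"
      using False by (simp add: pb_H0_def W_eq ch_def)
    also have "\<dots> = Q js" using k1 by (simp add: field_simps)
    finally show ?thesis using False by (simp add: Z_def)
  qed
  have n1: "pnorm k Z \<le> pnorm k Q"
    using pnorm_le[of Z 1 Q Bd k] Zb Bd by simp
  have n2: "pnorm k ch \<le> C * pnorm k Q"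
    using pnorm_le[of ch C Q Bd k] chb Bd C0 by simp
  show ?thesis using hch hZ nf eq n1 n2 unfolding C_def by blast
qed

end
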